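(* If $\mathcal C=\mathrm{code}(\mathcal H,X)\subseteq 2^{[n]}$ is the code of a stable hyperplane arrangement $(\mathcal H,X)$, then $\Gamma(\mathcal C)=\mathrm{nerve}(\{H_i^+\cap X,\ H_i^-\cap X\}_{i\in[n]})$, where the vertex $i$ corresponds to the set $H_i^+\cap X$ and the vertex $\bar i$ to the set $H_i^-\cap X$.
   Context: An oriented affine hyperplane is $H_i=\{x:w_i\cdot x-h_i=0\}$ with $w_i\neq0$, $H_i^+=\{w_i\cdot x-h_i>0\}$, $H_i^-=\{w_i\cdot x-h_i<0\}$. For $\mathcal H=\{H_1,\dots,H_n\}$ and open convex $X\subseteq\mathbb R^d$, the atom of $\sigma$ is $A_\sigma=\bigl(\bigcap_{i\in\sigma}(H_i^+\cap X)\bigr)\setminus\bigcup_{j\notin\sigma}H_j^+$ ($A_\emptyset=X\setminus\bigcup_iH_i^+$), and $\mathrm{code}(\mathcal H,X)=\{\sigma:A_\sigma\ne\emptyset\}$. $(\mathcal H,X)$ is stable if $X$ is open convex and whenever $X\cap\bigcap_{i\in\sigma}H_i\ne\emptyset$, $\dim\bigcap_{i\in\sigma}H_i=d-|\sigma|$. The polar complex $\Gamma(\mathcal C)$ is the simplicial complex on $[n]\sqcup\{\bar1,\dots,\bar n\}$ consisting of all subsets of the sets $\Sigma(\sigma)=\sigma\sqcup\{\bar i:i\in[n]\setminus\sigma\}$, $\sigma\in\mathcal C$. The nerve of a family of sets $\{V_v\}_{v\in V}$ is $\{S\subseteq V:\bigcap_{v\in S}V_v\neq\emptyset\}$. *)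

theory Defs
  imports "HOL-Analysis.Analysis"
begin

definition hyp :: "(nat \<Rightarrow> 'a::euclidean_space) \<Rightarrow> (nat \<Rightarrow> real) \<Rightarrow> nat \<Rightarrow> 'a set" where
  "hyp w h i = {x. w i \<bullet> x - h i = 0}"

definition hplus :: "(nat \<Rightarrow> 'a::euclidean_space) \<Rightarrow> (nat \<Rightarrow> real) \<Rightarrow> nat \<Rightarrow> 'a set" where
  "hplus w h i = {x. w i \<bullet> x - h i > 0}"

definition hminus :: "(nat \<Rightarrow> 'a::euclidean_space) \<Rightarrow> (nat \<Rightarrow> real) \<Rightarrow> nat \<Rightarrow> 'a set" where
  "hminus w h i = {x. w i \<bullet> x - h i < 0}"

text \<open>Atom of sigma (the X-intersection also covers the case sigma = empty).\<close>
definition atom :: "nat \<Rightarrow> (nat \<Rightarrow> 'a::euclidean_space) \<Rightarrow> (nat \<Rightarrow> real) \<Rightarrow> 'a set \<Rightarrow> nat set \<Rightarrow> 'a set" where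
  "atom n w h X \<sigma> = (X \<inter> (\<Inter>i\<in>\<sigma>. hplus w h i \<inter> X)) - (\<Union>j\<in>{1..n} - \<sigma>. hplus w h j)"

definition code :: "nat \<Rightarrow> (nat \<Rightarrow> 'a::euclidean_space) \<Rightarrow> (nat \<Rightarrow> real) \<Rightarrow> 'a set \<Rightarrow> nat set set" where
  "code n w h X = {\<sigma>. \<sigma> \<subseteq> {1..n} \<and> atom n w h X \<sigma> \<noteq> {}}"

definition stable :: "nat \<Rightarrow> (nat \<Rightarrow> 'a::euclidean_space) \<Rightarrow> (nat \<Rightarrow> real) \<Rightarrow> 'a set \<Rightarrow> bool" where
  "stable n w h X \<longleftrightarrow> open X \<and> convex X \<and>
     (\<forall>\<sigma>. \<sigma> \<subseteq> {1..n} \<longrightarrow> X \<inter> (\<Inter>i\<in>\<sigma>. hyp w h i) \<noteq> {} \<longrightarrow>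
        aff_dim (\<Inter>i\<in>\<sigma>. hyp w h i) = int DIM('a) - int (card \<sigma>))"

text \<open>Vertex Inl i stands for i, vertex Inr i stands for bar i.\<close>
definition polar_face :: "nat \<Rightarrow> nat set \<Rightarrow> (nat + nat) set" where
  "polar_face n \<sigma> = Inl ` \<sigma> \<union> Inr ` ({1..n} - \<sigma>)"

definition polar_complex :: "nat \<Rightarrow> nat set set \<Rightarrow> (nat + nat) set set" where
  "polar_complex n C = {S. \<exists>\<sigma>\<in>C. S \<subseteq> polar_face n \<sigma>}"

text \<open>Nerve of a family F indexed by V, with intersections taken inside the ambient set U
  (so the empty face is present iff U is nonempty).\<close>
definition nerve :: "'b set \<Rightarrow> 'v set \<Rightarrow> ('v \<Rightarrow> 'b set) \<Rightarrow> 'v set set" where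
  "nerve U V F = {S. S \<subseteq> V \<and> U \<inter> (\<Inter>v\<in>S. F v) \<noteq> {}}"

end

theory Submission
  imports Defs
begin

lemma indep_dual:
  fixes W :: "'a::euclidean_space set"
  assumes "independent W"
  shows "\<exists>v. \<forall>w\<in>W. w \<bullet> v = -1"
proof -
  obtain g :: "'a \<Rightarrow> real" where g: "linear g" "\<forall>x\<in>W. g x = -1"
    using linear_independent_extend[OF assms, of "\<lambda>_. -1"] by blast
  define v where "v = (\<Sum>b\<in>Basis. g b *\<^sub>R b)"
  have "w \<bullet> v = g w" for w
  proof -
    have "g w = g (\<Sum>b\<in>Basis. (w \<bullet> b) *\<^sub>R b)" by (simp add: euclidean_representation)
    also have "\<dots> = (\<Sum>b\<in>Basis. (w \<bullet> b) * g b)"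
      using g(1) by (simp add: linear_sum linear_scale)
    also have "\<dots> = w \<bullet> v" unfolding v_def by (simp add: inner_sum_right mult.commute)
    finally show ?thesis by simp
  qed
  thus ?thesis using g by (intro exI[of _ v]) auto
qed

lemma dim_indep:
  fixes w :: "nat \<Rightarrow> 'a::euclidean_space"
  assumes fin: "finite T" and x0: "\<forall>j\<in>T. w j \<bullet> x0 = h j"
    and ad: "aff_dim (\<Inter>j\<in>T. {x. w j \<bullet> x - h j = 0}) = int DIM('a) - int (card T)"
  shows "independent (w ` T)"
proof -
  define L where "L = {v. \<forall>j\<in>T. w j \<bullet> v = 0}"
  have eq: "(\<Inter>j\<in>T. {x. w j \<bullet> x - h j = 0}) = (+) x0 ` L"
  proof (intro equalityI subsetI)
    fix x assume "x \<in> (\<Inter>j\<in>T. {x. w j \<bullet> x - h j = 0})"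
    then have "x - x0 \<in> L" using x0 by (auto simp: L_def inner_diff_right)
    then show "x \<in> (+) x0 ` L" by (metis add.commute diff_add_cancel image_eqI)
  next
    fix x assume "x \<in> (+) x0 ` L"
    then show "x \<in> (\<Inter>j\<in>T. {x. w j \<bullet> x - h j = 0})" using x0 by (auto simp: L_def inner_add_right)
  qed
  have sL: "subspace L" unfolding L_def subspace_def by (auto simp: inner_add_right)
  have L2: "L = {y \<in> UNIV. \<forall>x \<in> span (w ` T). orthogonal x y}"
  proof (intro equalityI subsetI)
    fix y assume y: "y \<in> L"
    have "orthogonal x y" if "x \<in> span (w ` T)" for x
    proof -
      have "orthogonal y x"
        by (rule orthogonal_to_span[OF that]) (use y in \<open>auto simp: L_def orthogonal_def inner_commute\<close>)
      thus ?thesis by (simp add: orthogonal_commute)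
    qed
    thus "y \<in> {y \<in> UNIV. \<forall>x \<in> span (w ` T). orthogonal x y}" by auto
  next
    fix y assume "y \<in> {y \<in> UNIV. \<forall>x \<in> span (w ` T). orthogonal x y}"
    then have "\<forall>j\<in>T. orthogonal (w j) y" by (simp add: span_base)
    thus "y \<in> L" by (auto simp: L_def orthogonal_def)
  qed
  have "dim L + dim (span (w ` T)) = dim (UNIV :: 'a set)"
    unfolding L2 by (rule dim_subspace_orthogonal_to_vectors) auto
  moreover have "aff_dim L = int DIM('a) - int (card T)" using ad eq aff_dim_translation_eq by metis
  ultimately have d: "dim (w ` T) = card T" using aff_dim_subspace[OF sL] by simp
  have "card (w ` T) \<le> card T" by (rule card_image_le[OF fin])
  moreover have "dim (w ` T) \<le> card (w ` T)" by (rule dim_le_card) (auto simp: fin span_superset)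
  ultimately have "card (w ` T) = dim (w ` T)" using d by simp
  moreover have "w ` T \<subseteq> span (w ` T)" by (rule span_superset)
  moreover have "finite (w ` T)" using fin by simp
  ultimately show ?thesis using card_eq_dim[of "w ` T" "w ` T"] by simp
qed

theorem lemma2p9:
  fixes n :: nat and w :: "nat \<Rightarrow> 'a::euclidean_space" and h :: "nat \<Rightarrow> real" and X :: "'a set"
  assumes "\<forall>i\<in>{1..n}. w i \<noteq> 0"
    and "stable n w h X"
  shows "polar_complex n (code n w h X) =
         nerve X (Inl ` {1..n} \<union> Inr ` {1..n})
           (\<lambda>v. case v of Inl i \<Rightarrow> hplus w h i \<inter> X | Inr i \<Rightarrow> hminus w h i \<inter> X)"
    (is "?L = nerve X ?V ?F")
proof (rule equalityI; rule subsetI)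
  fix S assume "S \<in> ?L"
  then obtain \<sigma> where sc: "\<sigma> \<in> code n w h X" and Sp: "S \<subseteq> polar_face n \<sigma>"
    unfolding polar_complex_def by blast
  then have sn: "\<sigma> \<subseteq> {1..n}" and "atom n w h X \<sigma> \<noteq> {}" unfolding code_def by auto
  then obtain x where xa: "x \<in> atom n w h X \<sigma>" by blast
  have xX: "x \<in> X" using xa unfolding atom_def by blast
  have xp: "\<forall>i\<in>\<sigma>. w i \<bullet> x - h i > 0" using xa unfolding atom_def hplus_def by blast
  have xm: "\<forall>j\<in>{1..n}-\<sigma>. \<not> (w j \<bullet> x - h j > 0)" using xa unfolding atom_def hplus_def by blast
  have op: "open X" and st: "\<forall>\<sigma>. \<sigma> \<subseteq> {1..n} \<longrightarrow> X \<inter> (\<Inter>i\<in>\<sigma>. hyp w h i) \<noteq> {} \<longrightarrow>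
        aff_dim (\<Inter>i\<in>\<sigma>. hyp w h i) = int DIM('a) - int (card \<sigma>)"
    using assms(2) unfolding stable_def by auto
  define \<tau> where "\<tau> = {j\<in>{1..n}-\<sigma>. w j \<bullet> x - h j = 0}"
  have tn: "\<tau> \<subseteq> {1..n}" and tf: "finite \<tau>" unfolding \<tau>_def by auto
  have "x \<in> X \<inter> (\<Inter>i\<in>\<tau>. hyp w h i)" using xX unfolding \<tau>_def hyp_def by auto
  then have "aff_dim (\<Inter>i\<in>\<tau>. hyp w h i) = int DIM('a) - int (card \<tau>)" using st tn by blast
  then have "independent (w ` \<tau>)"
    by (intro dim_indep[OF tf, of w x h]) (auto simp: \<tau>_def hyp_def)
  then obtain v where v: "\<forall>j\<in>\<tau>. w j \<bullet> v = -1" using indep_dual by blast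
  define U where "U = X \<inter> (\<Inter>i\<in>\<sigma>. {y. h i < w i \<bullet> y}) \<inter> (\<Inter>j\<in>({1..n}-\<sigma>)-\<tau>. {y. w j \<bullet> y < h j})"
  have "finite \<sigma>" using sn finite_subset by blast
  then have "open U" unfolding U_def
    by (intro open_Int op open_INT) (auto simp: open_halfspace_lt open_halfspace_gt)
  moreover have "x \<in> U" unfolding U_def using xX xp xm by (force simp: \<tau>_def)
  ultimately obtain e where e: "e > 0" "ball x e \<subseteq> U" using open_contains_ball by blast
  define t where "t = e / (2 * (norm v + 1))"
  have tpos: "t > 0" unfolding t_def using e by (intro divide_pos_pos) (auto intro: add_pos_nonneg, smt (verit) norm_ge_zero)
  define y where "y = x + t *\<^sub>R v"
  have "dist x y = t * norm v" unfolding y_def dist_norm using tpos by simp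
  also have "\<dots> < e"
  proof -
    have "t * norm v \<le> t * (norm v + 1)" using tpos by simp
    also have "\<dots> = e / 2"
    proof -
      have "norm v + 1 > 0" by (smt (verit) norm_ge_zero)
      then show ?thesis unfolding t_def by (simp add: field_simps)
    qed
    finally show ?thesis using e by linarith
  qed
  finally have "y \<in> U" using e by auto
  then have yX: "y \<in> X" and yp: "\<forall>i\<in>\<sigma>. w i \<bullet> y - h i > 0"
    and ym1: "\<forall>j\<in>({1..n}-\<sigma>)-\<tau>. w j \<bullet> y - h j < 0" unfolding U_def by auto
  have ym2: "\<forall>j\<in>\<tau>. w j \<bullet> y - h j < 0"
  proof
    fix j assume j: "j \<in> \<tau>"
    have "w j \<bullet> y - h j = (w j \<bullet> x - h j) + t * (w j \<bullet> v)" unfolding y_def by (simp add: inner_add_right)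
    also have "\<dots> = - t" using j v by (simp add: \<tau>_def)
    finally show "w j \<bullet> y - h j < 0" using tpos by simp
  qed
  have "S \<subseteq> ?V" using Sp sn unfolding polar_face_def by blast
  moreover have "y \<in> X \<inter> (\<Inter>s\<in>S. ?F s)"
  proof -
    have "y \<in> ?F s" if "s \<in> S" for s
    proof (cases s)
      case (Inl i)
      then have "i \<in> \<sigma>" using that Sp unfolding polar_face_def by auto
      then show ?thesis using Inl yp yX by (auto simp: hplus_def)
    next
      case (Inr i)
      then have "i \<in> {1..n} - \<sigma>" using that Sp unfolding polar_face_def by auto
      then show ?thesis using Inr ym1 ym2 yX by (cases "i \<in> \<tau>") (auto simp: hminus_def)
    qed
    then show ?thesis using yX by auto
  qed
  ultimately show "S \<in> nerve X ?V ?F" unfolding nerve_def by blast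
next
  fix S assume "S \<in> nerve X ?V ?F"
  then obtain x where SV: "S \<subseteq> ?V" and xX: "x \<in> X" and xS: "\<forall>s\<in>S. x \<in> ?F s"
    unfolding nerve_def by blast
  define \<sigma> where "\<sigma> = {i\<in>{1..n}. w i \<bullet> x - h i > 0}"
  have "x \<in> atom n w h X \<sigma>" using xX unfolding atom_def \<sigma>_def hplus_def by auto
  then have "\<sigma> \<in> code n w h X" unfolding code_def \<sigma>_def by auto
  moreover have "S \<subseteq> polar_face n \<sigma>"
  proof
    fix s assume s: "s \<in> S"
    show "s \<in> polar_face n \<sigma>"
    proof (cases s)
      case (Inl i)
      then show ?thesis using s SV xS unfolding polar_face_def \<sigma>_def
        by (force simp: hplus_def)
    next
      case (Inr i)
      then show ?thesis using s SV xS unfolding polar_face_def \<sigma>_def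
        by (force simp: hminus_def)
    qed
  qed
  ultimately show "S \<in> ?L" unfolding polar_complex_def by blast
qed

end
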